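(* For every $n\ge1$, the half space $\mathbb R^n_+=\{x\in\mathbb R^n:x_n\ge0\}$ is isomorphic in the category $\tilde{\mathcal A}$ to the orthant $(\mathbb R_+)^n=[0,\infty)^n\subset\mathbb R^n$; both carry the metric induced from the Euclidean metric of $\mathbb R^n$ and base point the origin. That is, there is a homeomorphism $T:(\mathbb R_+)^n\to\mathbb R^n_+$ such that both $T$ and $T^{-1}$ are morphisms of $\tilde{\mathcal A}$.
   Context: A map $f:X\to Y$ of metric spaces is asymptotically Lipschitz if there are $\lambda,s\ge0$ with $d_Y(f(x),f(x'))\le\lambda d_X(x,x')+s$. Morphisms of $\tilde{\mathcal A}$ between proper metric spaces with base points $x_0,y_0$ are continuous maps that are proper (preimages of compact sets compact), asymptotically Lipschitz, and have nonzero norm: there exist $c>0$, $b\ge 0$ with $d_Y(f(x),y_0)\ge c\,d_X(x,x_0)-b$ for all $x$. *)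

theory Defs
  imports "HOL-Analysis.Analysis"
begin

definition asymp_lipschitz_on :: "'a::metric_space set \<Rightarrow> ('a \<Rightarrow> 'b::metric_space) \<Rightarrow> bool" where
  "asymp_lipschitz_on X f \<longleftrightarrow>
     (\<exists>L s. L \<ge> 0 \<and> s \<ge> 0 \<and> (\<forall>x\<in>X. \<forall>x'\<in>X. dist (f x) (f x') \<le> L * dist x x' + s))"

definition proper_map_on :: "'a::metric_space set \<Rightarrow> 'b::metric_space set \<Rightarrow> ('a \<Rightarrow> 'b) \<Rightarrow> bool" where
  "proper_map_on X Y f \<longleftrightarrow>
     (\<forall>K. K \<subseteq> Y \<and> compact K \<longrightarrow> compact {x \<in> X. f x \<in> K})"

definition nonzero_norm_on :: "'a::metric_space set \<Rightarrow> 'a \<Rightarrow> 'b::metric_space \<Rightarrow> ('a \<Rightarrow> 'b) \<Rightarrow> bool" where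
  "nonzero_norm_on X x0 y0 f \<longleftrightarrow>
     (\<exists>c b. c > 0 \<and> b \<ge> 0 \<and> (\<forall>x\<in>X. dist (f x) y0 \<ge> c * dist x x0 - b))"

definition tildeA_morphism ::
  "'a::metric_space set \<Rightarrow> 'a \<Rightarrow> 'b::metric_space set \<Rightarrow> 'b \<Rightarrow> ('a \<Rightarrow> 'b) \<Rightarrow> bool" where
  "tildeA_morphism X x0 Y y0 f \<longleftrightarrow>
     f ` X \<subseteq> Y \<and> continuous_on X f \<and> proper_map_on X Y f \<and>
     asymp_lipschitz_on X f \<and> nonzero_norm_on X x0 y0 f"

text \<open>The coordinates of R^n are indexed by a finite linearly ordered type; the last
  coordinate x_n is the one at the greatest index.\<close>

definition half_space :: "(real ^ ('n::{finite,linorder})) set" where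
  "half_space = {x. x $ Max (UNIV :: 'n set) \<ge> 0}"

definition orthant :: "(real ^ ('n::finite)) set" where
  "orthant = {x. \<forall>i. x $ i \<ge> 0}"

end

theory Submission
  imports Defs
begin

lemma generic_morph:
  fixes T :: "'a::real_normed_vector \<Rightarrow> 'b::real_normed_vector" and S :: "'b \<Rightarrow> 'a"
  assumes h: "homeomorphism X Y T S"
    and LT: "\<And>x y. x \<in> X \<Longrightarrow> y \<in> X \<Longrightarrow> dist (T x) (T y) \<le> L * dist x y"
    and LS: "\<And>x y. x \<in> Y \<Longrightarrow> y \<in> Y \<Longrightarrow> dist (S x) (S y) \<le> M * dist x y"
    and L: "L \<ge> 0" and M: "M > 0"
    and T0: "T 0 = 0" and S0: "S 0 = 0" and X0: "0 \<in> X" and Y0: "0 \<in> Y"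
  shows "tildeA_morphism X 0 Y 0 T"
proof -
  have im: "T ` X \<subseteq> Y" and cT: "continuous_on X T"
    using h by (auto simp: homeomorphism_def)
  have cS: "continuous_on Y S" using h by (auto simp: homeomorphism_def)
  have prp: "proper_map_on X Y T"
    unfolding proper_map_on_def
  proof (intro allI impI)
    fix K assume K: "K \<subseteq> Y \<and> compact K"
    have "{x \<in> X. T x \<in> K} = S ` K"
      using h K unfolding homeomorphism_def by force
    moreover have "compact (S ` K)"
      using K cS by (meson compact_continuous_image continuous_on_subset)
    ultimately show "compact {x \<in> X. T x \<in> K}" by simp
  qed
  have al: "asymp_lipschitz_on X T"
    unfolding asymp_lipschitz_on_def using LT L by (intro exI[of _ L] exI[of _ 0]) auto
  have bnd: "\<forall>x\<in>X. 1 / M * dist x 0 - 0 \<le> dist (T x) 0"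
  proof
    fix x assume x: "x \<in> X"
    have "T x \<in> Y" using im x by auto
    have "dist x 0 = dist (S (T x)) (S 0)" using h x S0 by (auto simp: homeomorphism_def)
    also have "\<dots> \<le> M * dist (T x) 0" using LS[OF \<open>T x \<in> Y\<close> Y0] .
    finally show "1 / M * dist x 0 - 0 \<le> dist (T x) 0" using M
      by (simp add: field_simps)
  qed
  have nz: "nonzero_norm_on X 0 0 T"
    unfolding nonzero_norm_on_def using bnd M by (intro exI[of _ "1/M"] exI[of _ 0]) auto
  show ?thesis unfolding tildeA_morphism_def using im cT prp al nz by auto
qed

lemma vec_lip:
  fixes f :: "'a::metric_space \<Rightarrow> real ^ 'n"
  assumes "\<And>i. \<bar>f x $ i - f y $ i\<bar> \<le> C * dist x y"
  shows "dist (f x) (f y) \<le> (real CARD('n) * C) * dist x y"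
proof -
  have "dist (f x) (f y) = norm (f x - f y)" by (simp add: dist_norm)
  also have "\<dots> \<le> (\<Sum>i\<in>UNIV. \<bar>(f x - f y) $ i\<bar>)" by (rule norm_le_l1_cart)
  also have "\<dots> \<le> (\<Sum>i\<in>(UNIV::'n set). C * dist x y)"
    by (intro sum_mono) (use assms in simp)
  finally show ?thesis by simp
qed

lemma min_lip:
  fixes f g :: "'n::finite \<Rightarrow> real"
  assumes "\<And>j. \<bar>f j - g j\<bar> \<le> d"
  shows "\<bar>Min (range f) - Min (range g)\<bar> \<le> d"
proof -
  have A: "Min (range f) - Min (range g) \<le> d" if "\<And>j. \<bar>f j - g j\<bar> \<le> d" for f g :: "'n \<Rightarrow> real"
  proof -
    have "Min (range g) \<in> range g" by (rule Min_in) auto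
    then obtain j where j: "Min (range g) = g j" by blast
    have "Min (range f) \<le> f j" by (rule Min_le) auto
    then show ?thesis using j that[of j] by linarith
  qed
  show ?thesis using A[of f g] A[of g f] assms
    by (smt (verit) abs_minus_commute)
qed

definition TT :: "real ^ ('n::{finite,linorder}) \<Rightarrow> real ^ ('n::{finite,linorder})" where
  "TT x = (\<chi> i. if i = Max UNIV then Min (range (\<lambda>j. x $ j)) else x $ i - x $ Max UNIV)"

definition cS :: "real ^ ('n::{finite,linorder}) \<Rightarrow> real" where
  "cS y = y $ Max UNIV - Min (range (\<lambda>j. if j = Max UNIV then 0 else y $ j))"

definition SS :: "real ^ ('n::{finite,linorder}) \<Rightarrow> real ^ ('n::{finite,linorder})" where
  "SS y = (\<chi> i. if i = Max UNIV then cS y else y $ i + cS y)"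

lemma TT_comp: "\<bar>TT x $ i - TT y $ i\<bar> \<le> 2 * dist x y"
proof -
  have c: "\<bar>x $ j - y $ j\<bar> \<le> dist x y" for j
    using component_le_norm_cart[of "x - y" j] by (simp add: dist_norm)
  have m: "\<bar>Min (range (\<lambda>j. x $ j)) - Min (range (\<lambda>j. y $ j))\<bar> \<le> dist x y"
    by (rule min_lip) (rule c)
  have "dist x y \<ge> 0" by simp
  then show ?thesis unfolding TT_def using m c[of i] c[of "Max UNIV"]
    by auto
qed

lemma cS_lip: "\<bar>cS x - cS y\<bar> \<le> 2 * dist x y"
proof -
  have c: "\<bar>x $ j - y $ j\<bar> \<le> dist x y" for j
    using component_le_norm_cart[of "x - y" j] by (simp add: dist_norm)
  have m: "\<bar>Min (range (\<lambda>j. if j = Max UNIV then 0 else x $ j)) -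
            Min (range (\<lambda>j. if j = Max UNIV then 0 else y $ j))\<bar> \<le> dist x y"
    by (rule min_lip) (use c in auto)
  show ?thesis unfolding cS_def using m c[of "Max UNIV"] by linarith
qed

lemma SS_comp: "\<bar>SS x $ i - SS y $ i\<bar> \<le> 3 * dist x y"
proof -
  have c: "\<bar>x $ j - y $ j\<bar> \<le> dist x y" for j
    using component_le_norm_cart[of "x - y" j] by (simp add: dist_norm)
  show ?thesis unfolding SS_def using cS_lip[of x y] c[of i] by auto
qed

lemma TT_in: "x \<in> orthant \<Longrightarrow> TT x \<in> half_space"
  unfolding orthant_def half_space_def TT_def
  by (auto intro!: Min.boundedI)

lemma cS_ge:
  assumes y: "y \<in> half_space"
  shows "cS y \<ge> 0" "j \<noteq> Max UNIV \<Longrightarrow> cS y + y $ j \<ge> 0"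
proof -
  define g where "g = (\<lambda>j. if j = Max UNIV then 0 else y $ j)"
  have a: "Min (range g) \<le> g j" by (rule Min_le) auto
  have b: "Min (range g) \<le> g (Max UNIV)" by (rule Min_le) auto
  have c: "cS y = y $ Max UNIV - Min (range g)" by (simp add: cS_def g_def)
  have yn: "y $ Max UNIV \<ge> 0" using y by (simp add: half_space_def)
  have b': "g (Max UNIV) = 0" by (simp add: g_def)
  show "cS y \<ge> 0" using b b' c yn by linarith
  show "j \<noteq> Max UNIV \<Longrightarrow> cS y + y $ j \<ge> 0"
  proof -
    assume "j \<noteq> Max UNIV"
    then have "g j = y $ j" by (simp add: g_def)
    then show ?thesis using a c yn by linarith
  qed
qed

lemma SS_in: "y \<in> half_space \<Longrightarrow> SS y \<in> orthant"
  unfolding orthant_def SS_def using cS_ge[of y]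
  by (auto simp: add.commute)

lemma Min_shift:
  fixes f :: "'n::finite \<Rightarrow> real"
  shows "Min (range (\<lambda>j. f j + c)) = Min (range f) + c"
proof (rule antisym)
  have "Min (range f) \<in> range f" by (rule Min_in) auto
  then obtain j where j: "Min (range f) = f j" by blast
  show "Min (range (\<lambda>j. f j + c)) \<le> Min (range f) + c"
    unfolding j by (rule Min_le) auto
  have "Min (range (\<lambda>j. f j + c)) \<in> range (\<lambda>j. f j + c)" by (rule Min_in) auto
  then obtain k where k: "Min (range (\<lambda>j. f j + c)) = f k + c" by blast
  have "Min (range f) \<le> f k" by (rule Min_le) auto
  then show "Min (range f) + c \<le> Min (range (\<lambda>j. f j + c))" unfolding k by simp
qed

lemma TS: "TT (SS y) = y"
proof -
  let ?g = "\<lambda>j. if j = Max UNIV then 0 else y $ j"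
  have e: "(\<lambda>j. SS y $ j) = (\<lambda>j. ?g j + cS y)"
    by (auto simp: SS_def)
  have "Min (range (\<lambda>j. SS y $ j)) = y $ Max UNIV"
    unfolding e Min_shift by (simp add: cS_def)
  then show ?thesis by (auto simp: TT_def SS_def vec_eq_iff)
qed

lemma ST: "SS (TT x) = x"
proof -
  let ?g = "\<lambda>j. if j = Max UNIV then 0 else TT x $ j"
  have e: "?g = (\<lambda>j. x $ j + (- x $ Max UNIV))"
    by (auto simp: TT_def)
  have "cS (TT x) = x $ Max UNIV"
    unfolding cS_def e Min_shift by (simp add: TT_def)
  then show ?thesis by (auto simp: TT_def SS_def vec_eq_iff)
qed

theorem lemma4p2:
  shows "\<exists>(T :: real ^ ('n::{finite,linorder}) \<Rightarrow> real ^ ('n::{finite,linorder})) (S :: real ^ ('n::{finite,linorder}) \<Rightarrow> real ^ ('n::{finite,linorder})).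
           homeomorphism orthant half_space T S \<and>
           tildeA_morphism orthant 0 half_space 0 T \<and>
           tildeA_morphism half_space 0 orthant 0 S"
proof (intro exI conjI)
  have LT: "dist (TT x) (TT y) \<le> (real CARD('n::{finite,linorder}) * 2) * dist x y" for x y :: "real ^ ('n::{finite,linorder})"
    by (rule vec_lip) (rule TT_comp)
  have LS: "dist (SS x) (SS y) \<le> (real CARD('n::{finite,linorder}) * 3) * dist x y" for x y :: "real ^ ('n::{finite,linorder})"
    by (rule vec_lip) (rule SS_comp)
  have h: "homeomorphism orthant half_space (TT :: real ^ ('n::{finite,linorder}) \<Rightarrow> _) SS"
    unfolding homeomorphism_def
  proof (intro conjI)
    show "continuous_on orthant (TT :: real ^ ('n::{finite,linorder}) \<Rightarrow> _)"
      by (rule lipschitz_on_continuous_on[OF lipschitz_onI[OF LT]]) auto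
    show "continuous_on half_space (SS :: real ^ ('n::{finite,linorder}) \<Rightarrow> _)"
      by (rule lipschitz_on_continuous_on[OF lipschitz_onI[OF LS]]) auto
    show "TT ` orthant = (half_space :: (real ^ ('n::{finite,linorder})) set)"
    proof
      show "TT ` orthant \<subseteq> (half_space :: (real ^ ('n::{finite,linorder})) set)" using TT_in by auto
      show "(half_space :: (real ^ ('n::{finite,linorder})) set) \<subseteq> TT ` orthant"
      proof
        fix y :: "real ^ ('n::{finite,linorder})" assume "y \<in> half_space"
        then show "y \<in> TT ` orthant" using image_eqI[of y TT "SS y" orthant] TS[of y] SS_in by auto
      qed
    qed
    show "SS ` half_space = (orthant :: (real ^ ('n::{finite,linorder})) set)"
    proof
      show "SS ` half_space \<subseteq> (orthant :: (real ^ ('n::{finite,linorder})) set)" using SS_in by auto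
      show "(orthant :: (real ^ ('n::{finite,linorder})) set) \<subseteq> SS ` half_space"
      proof
        fix y :: "real ^ ('n::{finite,linorder})" assume "y \<in> orthant"
        then show "y \<in> SS ` half_space" using image_eqI[of y SS "TT y" half_space] ST[of y] TT_in by auto
      qed
    qed
  qed (use TS ST in auto)
  have T0: "TT 0 = (0 :: real ^ ('n::{finite,linorder}))" unfolding TT_def by (simp add: vec_eq_iff)
  have S0': "(\<lambda>j. if j = Max UNIV then 0 else (0 :: real ^ ('n::{finite,linorder})) $ j) = (\<lambda>j. 0)"
    by (rule ext) simp
  have S0r: "range (\<lambda>j::'n::{finite,linorder}. 0::real) = {0}" by blast
  have c0: "cS (0 :: real ^ ('n::{finite,linorder})) = 0"
    unfolding cS_def S0' S0r by simp
  have S0: "SS 0 = (0 :: real ^ ('n::{finite,linorder}))" unfolding SS_def c0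
    by (simp add: vec_eq_iff)
  have O0: "(0 :: real ^ ('n::{finite,linorder})) \<in> orthant" by (simp add: orthant_def)
  have H0: "(0 :: real ^ ('n::{finite,linorder})) \<in> half_space" by (simp add: half_space_def)
  have h': "homeomorphism half_space orthant (SS :: real ^ ('n::{finite,linorder}) \<Rightarrow> _) TT"
    using h by (simp only: homeomorphism_sym[of orthant])
  show "homeomorphism orthant half_space (TT :: real ^ ('n::{finite,linorder}) \<Rightarrow> _) SS" by (rule h)
  show "tildeA_morphism orthant 0 half_space 0 (TT :: real ^ ('n::{finite,linorder}) \<Rightarrow> _)"
    by (rule generic_morph[OF h LT LS _ _ T0 S0 O0 H0]) auto
  show "tildeA_morphism half_space 0 orthant 0 (SS :: real ^ ('n::{finite,linorder}) \<Rightarrow> _)"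
    by (rule generic_morph[OF h' LS LT _ _ S0 T0 H0 O0]) auto
qed

end
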